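(* Let $A,B\in\mathbb{C}$ with $4A^3+27B^2\neq0$, and let $C=\{(x,y)\in\mathbb{C}^2: y^2=x^3+Ax+B\}$ be the corresponding smooth affine cubic curve. Then for every polynomial $P\in\mathbb{C}[x,y]$ the restriction $P|_C:C\to\mathbb{C}$ has at least one critical point on $C$, i.e. there is a point of $C$ at which the differential of $P|_C$ vanishes.
   Context: The curve $C$ is parametrized as $t\mapsto(x(t),y(t))$, $t\in\mathbb{C}\setminus\Gamma$, where $\Gamma\subset\mathbb{C}$ is a lattice of rank two and $x,y$ are $\Gamma$-periodic meromorphic (elliptic) functions, holomorphic on $\mathbb{C}\setminus\Gamma$ with poles at the points of $\Gamma$, satisfying $y^2=x^3+Ax+B$; this parametrization is a local biholomorphism onto $C$. *)

theory Defs
  imports "HOL-Analysis.Analysis"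
begin

definition poly2 :: "(nat \<Rightarrow> nat \<Rightarrow> complex) \<Rightarrow> nat \<Rightarrow> complex \<times> complex \<Rightarrow> complex" where
  "poly2 c n = (\<lambda>(x, y). \<Sum>i\<le>n. \<Sum>j\<le>n. c i j * x ^ i * y ^ j)"

definition cubic_eq :: "complex \<Rightarrow> complex \<Rightarrow> complex \<times> complex \<Rightarrow> complex" where
  "cubic_eq A B = (\<lambda>(x, y). y ^ 2 - (x ^ 3 + A * x + B))"

definition cubic_curve :: "complex \<Rightarrow> complex \<Rightarrow> (complex \<times> complex) set" where
  "cubic_curve A B = {(x, y). y ^ 2 = x ^ 3 + A * x + B}"

text \<open>p is a critical point of P restricted to C: p lies on C and the differential of P at p
  vanishes on the tangent space of C at p, i.e. on the kernel of dF_p.\<close>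
definition critical_point_on_curve ::
  "complex \<Rightarrow> complex \<Rightarrow> (complex \<times> complex \<Rightarrow> complex) \<Rightarrow> complex \<times> complex \<Rightarrow> bool" where
  "critical_point_on_curve A B P p \<longleftrightarrow>
     p \<in> cubic_curve A B \<and>
     (\<exists>P' F'. (P has_derivative P') (at p) \<and> (cubic_eq A B has_derivative F') (at p) \<and>
        (\<forall>v. F' v = 0 \<longrightarrow> P' v = 0))"

end

theory Submission
  imports Defs "HOL-Computational_Algebra.Fundamental_Theorem_Algebra"
begin

lemma pderiv_sum': "pderiv (sum g S) = (\<Sum>x\<in>S. pderiv (g x))"
  by (induction S rule: infinite_finite_induct) (simp_all add: pderiv_add)

definition fpol :: "complex \<Rightarrow> complex \<Rightarrow> complex poly" where
  "fpol A B = [:B, A, 0, 1:]"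

lemma poly_fpol: "poly (fpol A B) x = x ^ 3 + A * x + B"
  by (simp add: fpol_def algebra_simps power3_eq_cube)

lemma poly_dfpol: "poly (pderiv (fpol A B)) x = 3 * x ^ 2 + A"
  by (simp add: fpol_def pderiv_pCons algebra_simps power2_eq_square)

lemma degree_fpol: "degree (fpol A B) = 3"
  by (simp add: fpol_def)

definition Lop :: "complex poly \<Rightarrow> complex poly \<Rightarrow> complex poly" where
  "Lop f q = pderiv f * q + 2 * (f * pderiv q)"

lemma eval_pderiv_m:
  "poly (pderiv (monom 1 i * f ^ k)) x =
     x ^ i * (of_nat k * poly f x ^ (k - 1) * poly (pderiv f) x) + poly f x ^ k * (of_nat i * x ^ (i - 1))"
  by (simp add: pderiv_mult pderiv_power pderiv_monom poly_monom algebra_simps)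

lemma mono_even:
  fixes x y :: complex
  assumes "y ^ 2 = poly f x"
  shows "2 * y * (of_nat i * x ^ (i - 1) * y ^ (2 * k)) + poly (pderiv f) x * (of_nat (2 * k) * x ^ i * y ^ (2 * k - 1))
     = y * poly (smult 2 (pderiv (monom 1 i * f ^ k))) x"
proof (cases k)
  case 0
  then show ?thesis by (simp add: eval_pderiv_m pderiv_monom poly_monom)
next
  case (Suc k')
  have e1: "y ^ (2 * k) = poly f x ^ k" using assms by (simp add: power_mult)
  have "2 * k - 1 = 2 * k' + 1" using Suc by simp
  then have "y ^ (2 * k - 1) = (y ^ 2) ^ k' * y" by (simp add: power_mult)
  then have e2: "y ^ (2 * k - 1) = poly f x ^ k' * y" using assms by simp
  have k1: "k - Suc 0 = k'" using Suc by simp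
  show ?thesis unfolding e1 e2 by (simp add: eval_pderiv_m algebra_simps k1)
qed

lemma mono_odd:
  fixes x y :: complex
  assumes "y ^ 2 = poly f x"
  shows "2 * y * (of_nat i * x ^ (i - 1) * y ^ (2 * k + 1)) + poly (pderiv f) x * (of_nat (2 * k + 1) * x ^ i * y ^ (2 * k + 1 - 1))
     = poly (Lop f (monom 1 i * f ^ k)) x"
proof (cases k)
  case 0
  then show ?thesis using assms by (simp add: eval_pderiv_m Lop_def poly_monom pderiv_monom algebra_simps power2_eq_square)
next
  case (Suc k')
  have e1: "y ^ (2 * k) = poly f x ^ k" using assms by (simp add: power_mult)
  have q1: "(y ^ 2) ^ Suc k = y ^ (2 * Suc k)" by (rule power_mult[symmetric])
  have q2: "y ^ (2 * Suc k) = y * y ^ (2 * k + 1)" by simp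
  have "y * y ^ (2 * k + 1) = (y ^ 2) ^ Suc k" using q1 q2 by simp
  then have e2: "y * y ^ (2 * k + 1) = poly f x ^ Suc k" by (metis assms)
  have e3: "poly f x ^ Suc k = poly f x * poly f x ^ k" by simp
  have "2 * y * (of_nat i * x ^ (i - 1) * y ^ (2 * k + 1)) = 2 * of_nat i * x ^ (i - 1) * (y * y ^ (2 * k + 1))"
    by (simp add: algebra_simps)
  also have "\<dots> = 2 * of_nat i * x ^ (i - 1) * (poly f x * poly f x ^ k)" using e2 e3 by simp
  finally have e4: "2 * y * (of_nat i * x ^ (i - 1) * y ^ (2 * k + 1)) = 2 * of_nat i * x ^ (i - 1) * (poly f x * poly f x ^ k)" .
  have e5: "poly f x * poly f x ^ (k - Suc 0) = poly f x ^ k" using Suc by simp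
  have e6: "y ^ (2 * k + 1 - 1) = poly f x ^ k" using e1 by simp
  show ?thesis unfolding e4 e6
    by (simp add: eval_pderiv_m Lop_def poly_monom algebra_simps e5)
qed


definition Hq :: "complex poly \<Rightarrow> nat \<Rightarrow> nat \<Rightarrow> complex poly" where
  "Hq f i j = (if even j then smult 2 (pderiv (monom 1 i * f ^ (j div 2))) else 0)"

definition Gq :: "complex poly \<Rightarrow> nat \<Rightarrow> nat \<Rightarrow> complex poly" where
  "Gq f i j = Lop f (if odd j then monom 1 i * f ^ (j div 2) else 0)"

lemma Lop_0: "Lop f 0 = 0" by (simp add: Lop_def)

lemma mono_gen:
  fixes x y :: complex
  assumes "y ^ 2 = poly f x"
  shows "2 * y * (of_nat i * x ^ (i - 1) * y ^ j) + poly (pderiv f) x * (of_nat j * x ^ i * y ^ (j - 1))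
     = y * poly (Hq f i j) x + poly (Gq f i j) x"
proof (cases "even j")
  case True
  then obtain k where j: "j = 2 * k" by blast
  show ?thesis using mono_even[OF assms, of i k] True j by (simp add: Hq_def Gq_def Lop_0)
next
  case False
  then obtain k where j: "j = 2 * k + 1" using oddE by blast
  have "j div 2 = k" using j by simp
  then show ?thesis using mono_odd[OF assms, of i k] False j by (simp add: Hq_def Gq_def)
qed

lemma roots_exist:
  fixes p :: "complex poly"
  assumes "\<forall>x. poly p x \<noteq> 0"
  shows "degree p = 0"
  using fundamental_theorem_of_algebra[of p] constant_degree[of p] assms by blast

lemma unit_const:
  fixes f G H :: "complex poly"
  assumes nz: "\<forall>x y. y ^ 2 = poly f x \<longrightarrow> y * poly H x + poly G x \<noteq> 0"
    and df: "degree f = 3"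
  shows "H = 0 \<and> degree G = 0"
proof -
  define N where "N = G ^ 2 - f * H ^ 2"
  have "poly N x \<noteq> 0" for x
  proof -
    define y where "y = csqrt (poly f x)"
    have y2: "y ^ 2 = poly f x" unfolding y_def by simp
    have y3: "(- y) ^ 2 = poly f x" using y2 by simp
    have "poly N x = (y * poly H x + poly G x) * ((- y) * poly H x + poly G x)"
      unfolding N_def using y2 by (simp add: algebra_simps power2_eq_square)
    then show ?thesis using nz[rule_format, OF y2] nz[rule_format, OF y3] by auto
  qed
  then have dN: "degree N = 0" using roots_exist by blast
  have H0: "H = 0"
  proof (rule ccontr)
    assume Hn: "H \<noteq> 0"
    have fn: "f \<noteq> 0" using df by auto
    have d1: "degree (f * H ^ 2) = 3 + 2 * degree H"
      using Hn fn df by (simp add: degree_mult_eq degree_power_eq)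
    have d2: "degree (G ^ 2) = 2 * degree G"
      by (cases "G = 0") (simp_all add: degree_power_eq)
    have NN: "N = G ^ 2 + - (f * H ^ 2)" unfolding N_def by simp
    show False
    proof (cases "degree (G ^ 2) < degree (- (f * H ^ 2))")
      case True
      then have "degree (G ^ 2 + - (f * H ^ 2)) = degree (- (f * H ^ 2))" by (rule degree_add_eq_right)
      then have "degree N = 3 + 2 * degree H" unfolding NN using d1 by simp
      then show False using dN by simp
    next
      case False
      then have "degree (- (f * H ^ 2)) < degree (G ^ 2)" using d1 d2 by simp presburger
      then have "degree (G ^ 2 + - (f * H ^ 2)) = degree (G ^ 2)" by (rule degree_add_eq_left)
      then have "degree N = degree (G ^ 2)" unfolding NN by simp
      then show False using dN d1 d2 False by simp
    qed
  qed
  have "poly G x \<noteq> 0" for x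
    using nz[rule_format, of "csqrt (poly f x)" x] H0 by simp
  then have "degree G = 0" using roots_exist by blast
  then show ?thesis using H0 by simp
qed

lemma Lop_const:
  fixes f b :: "complex poly"
  assumes "degree (Lop f b) = 0" and df: "degree f = 3"
  shows "b = 0"
proof (rule ccontr)
  assume bn: "b \<noteq> 0"
  have fn: "f \<noteq> 0" using df by auto
  have eq: "pderiv (f * b ^ 2) = b * Lop f b"
    by (simp add: Lop_def pderiv_mult pderiv_power algebra_simps numeral_2_eq_2)
  obtain g where g: "Lop f b = [:g:]" using degree_0_id[OF assms(1)] by metis
  have "degree (pderiv (f * b ^ 2)) = 2 + 2 * degree b"
    using bn fn df by (simp add: degree_pderiv degree_mult_eq degree_power_eq)
  moreover have "degree (b * Lop f b) \<le> degree b" unfolding g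
    by (simp add: degree_smult_le)
  ultimately show False using eq by simp
qed

lemma Lop_sum: "Lop f (sum g S) = (\<Sum>x\<in>S. Lop f (g x))"
  by (induction S rule: infinite_finite_induct) (simp_all add: Lop_def Lop_0 pderiv_add algebra_simps sum.distrib sum_distrib_left)

lemma Lop_smult: "Lop f (smult a q) = smult a (Lop f q)"
  by (simp add: Lop_def pderiv_smult smult_add_right mult_smult_right mult_smult_left)

lemma poly2_deriv:
  "(poly2 c n has_derivative (\<lambda>v. \<Sum>i\<le>n. \<Sum>j\<le>n. c i j * (of_nat i * fst p ^ (i - 1) * fst v * snd p ^ j
      + fst p ^ i * (of_nat j * snd p ^ (j - 1) * snd v)))) (at p)"
proof -
  have e: "poly2 c n = (\<lambda>q. \<Sum>i\<le>n. \<Sum>j\<le>n. c i j * fst q ^ i * snd q ^ j)"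
    by (auto simp: poly2_def fun_eq_iff split: prod.splits)
  show ?thesis unfolding e
    by (auto intro!: derivative_eq_intros simp: algebra_simps)
qed

lemma cubic_deriv:
  "(cubic_eq A B has_derivative (\<lambda>v. 2 * snd p * snd v - (3 * fst p ^ 2 * fst v + A * fst v))) (at p)"
proof -
  have e: "cubic_eq A B = (\<lambda>q. snd q ^ 2 - (fst q ^ 3 + A * fst q + B))"
    by (auto simp: cubic_eq_def fun_eq_iff split: prod.splits)
  show ?thesis unfolding e
    by (auto intro!: derivative_eq_intros simp: algebra_simps)
qed


theorem mainTheorem6:
  fixes A B :: complex and c :: "nat \<Rightarrow> nat \<Rightarrow> complex" and n :: nat
  assumes "4 * A ^ 3 + 27 * B ^ 2 \<noteq> 0"
  shows "\<exists>p. critical_point_on_curve A B (poly2 c n) p"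
proof -
  define f where "f = fpol A B"
  have df: "degree f = 3" unfolding f_def by (rule degree_fpol)
  define H where "H = (\<Sum>i\<le>n. \<Sum>j\<le>n. smult (c i j) (Hq f i j))"
  define b where "b = (\<Sum>i\<le>n. \<Sum>j\<le>n. smult (c i j) (if odd j then monom 1 i * f ^ (j div 2) else 0))"
  define G where "G = Lop f b"
  define Px where "Px x y = (\<Sum>i\<le>n. \<Sum>j\<le>n. c i j * (of_nat i * x ^ (i - 1) * y ^ j))" for x y :: complex
  define Py where "Py x y = (\<Sum>i\<le>n. \<Sum>j\<le>n. c i j * (x ^ i * (of_nat j * y ^ (j - 1))))" for x y :: complex
  have Gs: "G = (\<Sum>i\<le>n. \<Sum>j\<le>n. smult (c i j) (Gq f i j))"
    unfolding G_def b_def Gq_def by (simp add: Lop_sum Lop_smult)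
  have Qeq: "2 * y * Px x y + poly (pderiv f) x * Py x y = y * poly H x + poly G x"
    if h: "y ^ 2 = poly f x" for x y
  proof -
    have "2 * y * Px x y + poly (pderiv f) x * Py x y = (\<Sum>i\<le>n. \<Sum>j\<le>n. c i j *
        (2 * y * (of_nat i * x ^ (i - 1) * y ^ j) + poly (pderiv f) x * (of_nat j * x ^ i * y ^ (j - 1))))"
      unfolding Px_def Py_def by (simp add: sum_distrib_left sum.distrib algebra_simps)
    also have "\<dots> = (\<Sum>i\<le>n. \<Sum>j\<le>n. c i j * (y * poly (Hq f i j) x + poly (Gq f i j) x))"
      using mono_gen[OF h] by simp
    also have "\<dots> = y * poly H x + poly G x"
      unfolding H_def Gs by (simp add: poly_sum sum_distrib_left sum.distrib algebra_simps)
    finally show ?thesis .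
  qed
  obtain x y where on: "y ^ 2 = poly f x" and Q0: "2 * y * Px x y + poly (pderiv f) x * Py x y = 0"
  proof -
    show thesis
    proof (rule ccontr)
      assume nt: "\<not> thesis"
      have nz: "\<forall>x y. y ^ 2 = poly f x \<longrightarrow> y * poly H x + poly G x \<noteq> 0"
        using that nt Qeq by metis
      have "H = 0 \<and> degree G = 0" using unit_const[OF nz df] .
      then have H0: "H = 0" and "degree (Lop f b) = 0" unfolding G_def by auto
      then have "b = 0" using Lop_const df by blast
      then have G0: "G = 0" unfolding G_def by (simp add: Lop_0)
      show False using nz[rule_format, of "csqrt (poly f 0)" 0] H0 G0 by simp
    qed
  qed
  have onC: "y ^ 2 = x ^ 3 + A * x + B" using on unfolding f_def poly_fpol .
  have df': "poly (pderiv f) x = 3 * x ^ 2 + A" unfolding f_def by (rule poly_dfpol)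
  have smooth: "y \<noteq> 0 \<or> 3 * x ^ 2 + A \<noteq> 0"
  proof (rule ccontr)
    assume "\<not> (y \<noteq> 0 \<or> 3 * x ^ 2 + A \<noteq> 0)"
    then have y0: "y = 0" and a: "A = - 3 * x ^ 2" by (auto simp: algebra_simps eq_neg_iff_add_eq_0)
    have h0: "x ^ 3 + A * x + B = 0" using onC y0 by simp
    have "B = -(x ^ 3) - A * x" using h0 by algebra
    then have bb: "B = 2 * x ^ 3" using a by (simp add: algebra_simps power3_eq_cube power2_eq_square)
    have "4 * A ^ 3 + 27 * B ^ 2 = 0" unfolding bb a by (simp add: algebra_simps power3_eq_cube power2_eq_square)
    then show False using assms by simp
  qed
  have P'eq: "(\<Sum>i\<le>n. \<Sum>j\<le>n. c i j * (of_nat i * fst (x, y) ^ (i - 1) * fst v * snd (x, y) ^ j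
      + fst (x, y) ^ i * (of_nat j * snd (x, y) ^ (j - 1) * snd v))) = Px x y * fst v + Py x y * snd v" for v
    unfolding Px_def Py_def by (simp add: sum_distrib_left sum_distrib_right sum.distrib algebra_simps)
  have key: "Px x y * fst v + Py x y * snd v = 0"
    if F0: "2 * snd (x, y) * snd v - (3 * fst (x, y) ^ 2 * fst v + A * fst v) = 0" for v :: "complex \<times> complex"
  proof -
    obtain v1 v2 where v: "v = (v1, v2)" by fastforce
    have F0': "2 * y * v2 = (3 * x ^ 2 + A) * v1" using F0 v by (simp add: algebra_simps)
    have Q0': "2 * y * Px x y + (3 * x ^ 2 + A) * Py x y = 0" using Q0 df' by simp
    show ?thesis
    proof (cases "y = 0")
      case True
      then have a: "3 * x ^ 2 + A \<noteq> 0" using smooth by simp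
      then have "v1 = 0" using F0' True by simp
      moreover have "Py x y = 0" using Q0' True a by simp
      ultimately show ?thesis using v by simp
    next
      case False
      have "2 * y * (Px x y * v1 + Py x y * v2) = v1 * (2 * y * Px x y) + Py x y * (2 * y * v2)"
        by (simp add: algebra_simps)
      also have "\<dots> = v1 * (2 * y * Px x y + (3 * x ^ 2 + A) * Py x y)" unfolding F0' by (simp add: algebra_simps)
      also have "\<dots> = 0" using Q0' by simp
      finally show ?thesis using False v by simp
    qed
  qed
  show ?thesis
    unfolding critical_point_on_curve_def cubic_curve_def
    apply (rule exI[of _ "(x, y)"])
    apply (intro conjI)
     apply (simp add: onC)
    apply (rule exI, rule exI, intro conjI, rule poly2_deriv, rule cubic_deriv)
    apply (intro allI impI)
    apply (subst P'eq)
    apply (rule key)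
    apply assumption
    done
qed

end
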